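(* Let $G$ be a non-abelian finite simple group, $V$ a non-trivial irreducible $\mathbb{R}G$-module of odd dimension affording $\rho\colon G\to\mathrm{GL}(V)$, and $n\in\mathrm{GL}(V)$ of finite order normalizing $\rho(G)$; let $\nu\in\mathrm{Aut}(G)$ be defined by $\nu(x)=\rho^{-1}(n\rho(x)n^{-1})$. Suppose there is $g\in G$ such that $\alpha:=\mathrm{ad}_g\circ\nu$ has even order and $$\dim(V)>(|\alpha|-1)\,|C_G(\alpha_{(p)})|^{1/2}$$ for all primes $p$ dividing $|\alpha|$. Then there is $h\in G$ such that $\rho(h)n$ has eigenvalue $1$.
   Context: $\mathrm{ad}_g$ is the inner automorphism $x\mapsto gxg^{-1}$. For a prime $p$ dividing the order of $\alpha\in\mathrm{Aut}(G)$, $\alpha_{(p)}$ denotes an element of order $p$ in the cyclic group $\langle\alpha\rangle$, and $C_G(\alpha_{(p)})=\{x\in G\mid \alpha_{(p)}(x)=x\}$. *)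

theory Defs
  imports "HOL-Analysis.Analysis" "HOL-Algebra.SimpleGroups"
begin

fun mat_pow :: "real^'n^'n \<Rightarrow> nat \<Rightarrow> real^'n^'n" where
  "mat_pow A 0 = mat 1"
| "mat_pow A (Suc k) = A ** mat_pow A k"

definition real_rep :: "('g, 'b) monoid_scheme \<Rightarrow> ('g \<Rightarrow> real^'n^'n) \<Rightarrow> bool" where
  "real_rep G \<rho> \<longleftrightarrow> (\<forall>x\<in>carrier G. invertible (\<rho> x)) \<and>
     (\<forall>x\<in>carrier G. \<forall>y\<in>carrier G. \<rho> (x \<otimes>\<^bsub>G\<^esub> y) = \<rho> x ** \<rho> y)"

definition irreducible_rep :: "('g, 'b) monoid_scheme \<Rightarrow> ('g \<Rightarrow> real^'n^'n) \<Rightarrow> bool" where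
  "irreducible_rep G \<rho> \<longleftrightarrow> (\<forall>W::(real^'n) set. subspace W \<and> (\<forall>x\<in>carrier G. (\<lambda>v. \<rho> x *v v) ` W \<subseteq> W)
      \<longrightarrow> W = {0} \<or> W = UNIV)"

definition aut_order :: "('g, 'b) monoid_scheme \<Rightarrow> ('g \<Rightarrow> 'g) \<Rightarrow> nat" where
  "aut_order G \<alpha> = (LEAST k. 0 < k \<and> (\<forall>x\<in>carrier G. (\<alpha> ^^ k) x = x))"

definition fixed_points :: "('g, 'b) monoid_scheme \<Rightarrow> ('g \<Rightarrow> 'g) \<Rightarrow> 'g set" where
  "fixed_points G \<beta> = {x \<in> carrier G. \<beta> x = x}"

end

theory Submission
  imports Defs "HOL-Algebra.Multiplicative_Group" "HOL-Computational_Algebra.Primes"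
begin

lemma mat_pow_add: "mat_pow A (a + b) = mat_pow A a ** mat_pow A b"
  by (induction a) (auto simp: matrix_mul_assoc)

lemma mat_pow_Suc': "mat_pow A (Suc k) = mat_pow A k ** A"
  using mat_pow_add[of A k 1] by simp

lemma det_mat_pow: "det (mat_pow A k) = det A ^ k"
  by (induction k) (auto simp: det_mul)

lemma mat_pow_comm:
  assumes "A ** B = B ** A" shows "mat_pow A k ** B = B ** mat_pow A k"
  using assms by (induction k) (auto simp: matrix_mul_assoc, metis matrix_mul_assoc)

lemma matrix_inv_props:
  fixes A :: "real^'n^'n"
  assumes "invertible A"
  shows "A ** matrix_inv A = mat 1" "matrix_inv A ** A = mat 1"
proof -
  have "\<exists>A'. A ** A' = mat 1 \<and> A' ** A = mat 1" using assms unfolding invertible_def by blast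
  from someI_ex[OF this] show "A ** matrix_inv A = mat 1" "matrix_inv A ** A = mat 1"
    unfolding matrix_inv_def by auto
qed

lemma mmult_sum_right: "finite S \<Longrightarrow> (A::real^'n^'n) ** sum f S = sum (\<lambda>i. A ** f i) S"
  by (induction S rule: finite_induct) (auto simp: matrix_add_ldistrib)

lemma matrix_add_rdistrib': "((B + C) ** (A::real^'n^'n)) = (B ** A) + (C ** A)"
  by (simp add: matrix_matrix_mult_def vec_eq_iff sum.distrib algebra_simps)

lemma mmult_sum_left: "finite S \<Longrightarrow> sum f S ** (A::real^'n^'n) = sum (\<lambda>i. f i ** A) S"
  by (induction S rule: finite_induct) (auto simp: matrix_add_rdistrib')

lemma trace_sum: "finite S \<Longrightarrow> trace (sum f S :: real^'n^'n) = sum (\<lambda>i. trace (f i)) S"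
  by (induction S rule: finite_induct) (auto simp: trace_add trace_0[simplified])

lemma trace_transpose: "trace (transpose (A::real^'n^'n)) = trace A"
  by (simp add: trace_def transpose_def)

lemma trace_scaleR: "trace (c *\<^sub>R (A::real^'n^'n)) = c * trace A"
  by (simp add: trace_def sum_distrib_left)

lemma det_scaleR: "det (c *\<^sub>R (A::real^'n^'n)) = c ^ CARD('n) * det A"
  unfolding det_def by (simp add: sum_distrib_left prod.distrib algebra_simps)

lemma scaleR_mat_vec: "(c *\<^sub>R (A::real^'n^'n)) *v v = c *\<^sub>R (A *v v)"
  by (simp add: matrix_vector_mult_def vec_eq_iff sum_distrib_left algebra_simps)

lemma eigen_from_det:
  fixes A :: "real^'n^'n"
  assumes "det A = 0" shows "\<exists>v. v \<noteq> 0 \<and> A *v v = 0"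
proof -
  have "\<not> invertible A" using assms invertible_det_nz by blast
  hence "\<not> (\<exists>B. B ** A = mat 1)" using invertible_left_inverse by blast
  thus ?thesis using matrix_left_invertible_ker by blast
qed

lemma odd_pow_eq_1:
  fixes c :: real
  assumes "odd d" "c ^ d = 1" shows "c = 1"
proof -
  have a: "\<bar>c\<bar> ^ d = 1" using assms by (simp add: power_abs[symmetric])
  have "d \<noteq> 0" proof assume "d = 0" with assms(1) show False by simp qed
  have "\<bar>c\<bar> = 1"
  proof (rule ccontr)
    assume "\<bar>c\<bar> \<noteq> 1"
    hence "\<bar>c\<bar> < 1 \<or> \<bar>c\<bar> > 1" by linarith
    thus False
    proof
      assume "\<bar>c\<bar> < 1" hence "\<bar>c\<bar> ^ d < 1" using \<open>d \<noteq> 0\<close> by (simp add: power_less_one_iff)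
      thus False using a by simp
    next
      assume "\<bar>c\<bar> > 1" hence "\<bar>c\<bar> ^ d > 1" using \<open>d \<noteq> 0\<close> by (simp add: one_less_power)
      thus False using a by simp
    qed
  qed
  moreover have "c \<noteq> -1" using assms by auto
  ultimately show ?thesis by linarith
qed

lemma continuous_det_affine:
  fixes A B :: "real^'n^'n"
  shows "continuous_on S (\<lambda>t. det (A + t *\<^sub>R B))"
  unfolding det_def by (intro continuous_intros)

lemma real_eigenvalue_odd:
  fixes B :: "real^'n^'n"
  assumes "odd CARD('n)"
  shows "\<exists>l v. v \<noteq> 0 \<and> B *v v = l *\<^sub>R v"
proof -
  let ?d = "CARD('n)"
  define h where "h s = det (mat 1 + s *\<^sub>R (- B))" for s :: real
  have "isCont h 0" unfolding h_def
    using continuous_det_affine[of UNIV "mat 1" "-B"] by (simp add: continuous_on_eq_continuous_at)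
  moreover have "h 0 = 1" by (simp add: h_def)
  ultimately obtain \<delta> where \<delta>: "\<delta> > 0" "\<And>s. dist s 0 < \<delta> \<Longrightarrow> dist (h s) 1 < 1"
    unfolding continuous_at_eps_delta by (metis zero_less_one)
  define t where "t = 2 / \<delta>"
  have t: "t > 0" "1/t < \<delta>" using \<delta> by (auto simp: t_def)
  have hpos: "h s > 0" if "\<bar>s\<bar> < \<delta>" for s
    using \<delta>(2)[of s] that by (auto simp: dist_real_def)
  define f where "f x = det (B + x *\<^sub>R (- mat 1))" for x
  have f_eq: "f x = (- x) ^ ?d * h (1 / x)" if "x \<noteq> 0" for x
  proof -
    have "(- x) *\<^sub>R (mat 1 + (1/x) *\<^sub>R (- B)) = (- x) *\<^sub>R mat 1 + ((- x) * (1/x)) *\<^sub>R (- B)"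
      by (simp only: scaleR_add_right scaleR_scaleR)
    also have "(- x) * (1/x) = -1" using that by simp
    finally have "B + x *\<^sub>R (- mat 1) = (- x) *\<^sub>R (mat 1 + (1/x) *\<^sub>R (- B))"
      by simp
    thus ?thesis unfolding f_def h_def by (subst \<open>B + x *\<^sub>R (- mat 1) = _\<close>) (rule det_scaleR)
  qed
  have "f t < 0"
  proof -
    have "(- t) ^ ?d < 0" using assms t by (simp add: power_minus_odd)
    moreover have "h (1/t) > 0" using hpos t by auto
    ultimately show ?thesis using f_eq[of t] t by (simp add: mult_neg_pos)
  qed
  moreover have "f (- t) > 0"
  proof -
    have "(- (- t)) ^ ?d > 0" using t by simp
    moreover have "h (1/(-t)) > 0" using hpos t by auto
    ultimately show ?thesis using f_eq[of "-t"] t by simp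
  qed
  moreover have "continuous_on {-t..t} f" unfolding f_def by (rule continuous_det_affine)
  ultimately obtain l where "f l = 0" using IVT2'[of f t 0 "-t"] t by force
  then obtain v where v: "v \<noteq> 0" "(B + l *\<^sub>R (- mat 1)) *v v = 0"
    using eigen_from_det unfolding f_def by blast
  have "(B + l *\<^sub>R (- mat 1)) *v v = B *v v - l *\<^sub>R v"
    by (simp add: algebra_simps scaleR_mat_vec)
  thus ?thesis using v by auto
qed

lemma pow_eq_1_abs:
  fixes c :: real
  assumes "c ^ k = 1" "k \<noteq> 0" shows "\<bar>c\<bar> = 1"
proof -
  have a: "\<bar>c\<bar> ^ k = 1" using assms by (simp add: power_abs[symmetric])
  show "\<bar>c\<bar> = 1"
  proof (rule ccontr)
    assume "\<bar>c\<bar> \<noteq> 1"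
    hence "\<bar>c\<bar> < 1 \<or> \<bar>c\<bar> > 1" by linarith
    thus False
    proof
      assume "\<bar>c\<bar> < 1" hence "\<bar>c\<bar> ^ k < 1" using assms(2) by (simp add: power_less_one_iff)
      thus False using a by simp
    next
      assume "\<bar>c\<bar> > 1" hence "\<bar>c\<bar> ^ k > 1" using assms(2) by (simp add: one_less_power)
      thus False using a by simp
    qed
  qed
qed

lemma sum_mat_vec: "finite S \<Longrightarrow> (sum f S :: real^'n^'n) *v v = sum (\<lambda>i. f i *v v) S"
  by (induction S rule: finite_induct) (auto simp: matrix_vector_mult_add_rdistrib)

lemma sum_entry: "(sum f S :: real^'n^'n) $ a $ b = sum (\<lambda>i. f i $ a $ b) S"
  by (simp add: sum_component)

lemma if_helper: "(if a = b then C * (if k = l then 1 else 0) / D else 0) = (if k = l \<and> a = b then C / D else (0::real))"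
  by simp

lemma scaleR_mat_entry: "((c::real) *\<^sub>R mat 1 :: real^'n^'n) $ a $ b = (if a = b then c else 0)"
  by (simp add: mat_def)

locale rep = group G for G (structure) +
  fixes \<rho> :: "'a \<Rightarrow> real^'n^'n"
  assumes fin: "finite (carrier G)"
    and rr: "real_rep G \<rho>" and irr: "irreducible_rep G \<rho>"
    and odd_dim: "odd CARD('n)"
    and rinj: "inj_on \<rho> (carrier G)"
begin

lemma rho_mult: "x \<in> carrier G \<Longrightarrow> y \<in> carrier G \<Longrightarrow> \<rho> (x \<otimes> y) = \<rho> x ** \<rho> y"
  using rr unfolding real_rep_def by blast

lemma rho_one: "\<rho> \<one> = mat 1"
proof -
  have "invertible (\<rho> \<one>)" using rr unfolding real_rep_def by blast
  then obtain B where B: "B ** \<rho> \<one> = mat 1" using invertible_left_inverse by blast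
  have "\<rho> \<one> = \<rho> \<one> ** \<rho> \<one>" using rho_mult[of \<one> \<one>] by simp
  hence "B ** \<rho> \<one> = B ** (\<rho> \<one> ** \<rho> \<one>)" by simp
  thus ?thesis using B by (simp add: matrix_mul_assoc)
qed

lemma rho_inv: "x \<in> carrier G \<Longrightarrow> \<rho> (inv x) ** \<rho> x = mat 1"
    "x \<in> carrier G \<Longrightarrow> \<rho> x ** \<rho> (inv x) = mat 1"
  using rho_mult[of "inv x" x] rho_mult[of x "inv x"] rho_one by auto

lemma rho_pow: "x \<in> carrier G \<Longrightarrow> \<rho> (x [^] k) = mat_pow (\<rho> x) k"
  by (induction k) (auto simp: rho_one rho_mult mat_pow_comm[OF refl])

lemma det_rho_sq: "x \<in> carrier G \<Longrightarrow> det (\<rho> x) ^ 2 = 1"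
proof -
  assume x: "x \<in> carrier G"
  have "order G \<noteq> 0" using fin by (simp add: order_gt_0_iff_finite[symmetric])
  have "mat_pow (\<rho> x) (order G) = mat 1"
    using rho_pow[OF x, of "order G"] pow_order_eq_1[OF x] rho_one by simp
  hence "det (\<rho> x) ^ order G = 1" by (metis det_I det_mat_pow)
  hence "\<bar>det (\<rho> x)\<bar> = 1" using pow_eq_1_abs \<open>order G \<noteq> 0\<close> by blast
  thus ?thesis by (metis abs_power2 power2_abs power_one) 
qed

lemma schur:
  assumes "\<And>u. u \<in> carrier G \<Longrightarrow> B ** \<rho> u = \<rho> u ** B"
  shows "\<exists>c. B = c *\<^sub>R mat 1"
proof -
  obtain l v where v: "v \<noteq> 0" "B *v v = l *\<^sub>R v" using real_eigenvalue_odd[OF odd_dim] by blast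
  define W where "W = {w. B *v w = l *\<^sub>R w}"
  have sub: "subspace W" unfolding W_def subspace_def
    by (auto simp: matrix_vector_right_distrib scaleR_add_right matrix_vector_mult_scaleR)
  have inv: "(\<lambda>w. \<rho> u *v w) ` W \<subseteq> W" if u: "u \<in> carrier G" for u
  proof
    fix z assume "z \<in> (\<lambda>w. \<rho> u *v w) ` W"
    then obtain w where w: "w \<in> W" "z = \<rho> u *v w" by blast
    have "B *v z = (B ** \<rho> u) *v w" by (simp add: w matrix_vector_mul_assoc)
    also have "\<dots> = \<rho> u *v (B *v w)" by (simp add: assms[OF u] matrix_vector_mul_assoc)
    also have "\<dots> = l *\<^sub>R z" using w by (simp add: W_def matrix_vector_mult_scaleR)
    finally show "z \<in> W" by (simp add: W_def)
  qed
  have "W = {0} \<or> W = UNIV" using irr sub inv unfolding irreducible_rep_def by blast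
  moreover have "v \<in> W" using v by (simp add: W_def)
  ultimately have "W = UNIV" using v by auto
  hence "\<forall>x. B *v x = (l *\<^sub>R mat 1) *v x" by (auto simp: W_def scaleR_mat_vec)
  thus ?thesis using matrix_eq by blast
qed

lemma bij_lmult: "v \<in> carrier G \<Longrightarrow> bij_betw (\<lambda>u. v \<otimes> u) (carrier G) (carrier G)"
  by (rule bij_betwI[where g = "\<lambda>u. inv v \<otimes> u"]) (auto simp: m_assoc[symmetric])

lemma bij_rmult: "v \<in> carrier G \<Longrightarrow> bij_betw (\<lambda>u. u \<otimes> v) (carrier G) (carrier G)"
  by (rule bij_betwI[where g = "\<lambda>u. u \<otimes> inv v"]) (auto simp: m_assoc)

definition SO :: "real^'n^'n \<Rightarrow> real^'n^'n" where
  "SO A = (\<Sum>u\<in>carrier G. \<rho> u ** A ** \<rho> (inv u))"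

lemma SO_comm: "v \<in> carrier G \<Longrightarrow> SO A ** \<rho> v = \<rho> v ** SO A"
proof -
  assume v: "v \<in> carrier G"
  have "\<rho> v ** SO A = (\<Sum>u\<in>carrier G. \<rho> (v \<otimes> u) ** A ** \<rho> (inv u))"
    unfolding SO_def using fin v by (simp add: mmult_sum_right rho_mult matrix_mul_assoc)
  also have "\<dots> = (\<Sum>u\<in>carrier G. \<rho> (v \<otimes> (inv v \<otimes> u)) ** A ** \<rho> (inv (inv v \<otimes> u)))"
    using sum.reindex_bij_betw[OF bij_lmult[of "inv v"], of "\<lambda>u. \<rho> (v \<otimes> u) ** A ** \<rho> (inv u)"] v
    by simp
  also have "\<dots> = (\<Sum>u\<in>carrier G. \<rho> u ** A ** \<rho> (inv u) ** \<rho> v)"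
    using v by (intro sum.cong) (auto simp: m_assoc[symmetric] inv_mult_group rho_mult matrix_mul_assoc)
  also have "\<dots> = SO A ** \<rho> v" unfolding SO_def using fin by (simp add: mmult_sum_left)
  finally show ?thesis by simp
qed

lemma SO_eq: "SO A = (real (card (carrier G)) * trace A / real CARD('n)) *\<^sub>R mat 1"
proof -
  obtain c where c: "SO A = c *\<^sub>R mat 1" using schur[of "SO A"] SO_comm by metis
  have "trace (SO A) = (\<Sum>u\<in>carrier G. trace (\<rho> u ** A ** \<rho> (inv u)))"
    unfolding SO_def using fin by (simp add: trace_sum)
  also have "\<dots> = (\<Sum>u\<in>carrier G. trace A)"
  proof (intro sum.cong refl)
    fix u assume u: "u \<in> carrier G"
    have "trace (\<rho> u ** A ** \<rho> (inv u)) = trace (\<rho> u ** (A ** \<rho> (inv u)))" by (simp add: matrix_mul_assoc)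
    also have "\<dots> = trace (A ** \<rho> (inv u) ** \<rho> u)" by (rule trace_mul_sym)
    also have "\<dots> = trace A" using rho_inv[OF u] by (simp add: matrix_mul_assoc[symmetric])
    finally show "trace (\<rho> u ** A ** \<rho> (inv u)) = trace A" .
  qed
  also have "\<dots> = real (card (carrier G)) * trace A" by simp
  finally have "c * real CARD('n) = real (card (carrier G)) * trace A"
    using c by (simp add: trace_scaleR trace_I)
  hence "c = real (card (carrier G)) * trace A / real CARD('n)" by (simp add: field_simps)
  thus ?thesis using c by simp
qed

definition Emat :: "'n \<Rightarrow> 'n \<Rightarrow> real^'n^'n" where
  "Emat k l = (\<chi> i j. if i = k \<and> j = l then 1 else 0)"

lemma entry_orth:
  "(\<Sum>u\<in>carrier G. \<rho> u $ a $ k * \<rho> (inv u) $ l $ b) =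
     (if k = l \<and> a = b then real (card (carrier G)) / real CARD('n) else 0)"
proof -
  have e1: "(X ** Emat k l) $ a $ j = (if j = l then X $ a $ k else 0)" for X :: "real^'n^'n" and j
  proof (cases "j = l")
    case True
    have "(X ** Emat k l) $ a $ j = (\<Sum>i\<in>UNIV. X $ a $ i * (if i = k then 1 else 0))"
      unfolding matrix_matrix_mult_def Emat_def using True by simp
    also have "\<dots> = (\<Sum>i\<in>UNIV. if i = k then X $ a $ i else 0)" by (rule sum.cong) auto
    also have "\<dots> = X $ a $ k" by simp
    finally show ?thesis using True by simp
  next
    case False
    thus ?thesis unfolding matrix_matrix_mult_def Emat_def by simp
  qed
  have e: "(X ** Emat k l ** Y) $ a $ b = X $ a $ k * Y $ l $ b" for X Y :: "real^'n^'n"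
  proof -
    have "(X ** Emat k l ** Y) $ a $ b = (\<Sum>j\<in>UNIV. (X ** Emat k l) $ a $ j * Y $ j $ b)"
      unfolding matrix_matrix_mult_def[of "X ** Emat k l"] by simp
    also have "\<dots> = (\<Sum>j\<in>UNIV. if j = l then X $ a $ k * Y $ j $ b else 0)"
      using e1 by (intro sum.cong) auto
    also have "\<dots> = X $ a $ k * Y $ l $ b" by simp
    finally show ?thesis .
  qed
  have 1: "SO (Emat k l) $ a $ b = (\<Sum>u\<in>carrier G. \<rho> u $ a $ k * \<rho> (inv u) $ l $ b)"
    unfolding SO_def sum_entry e ..
  have 2: "trace (Emat k l) = (if k = l then 1 else 0)"
    by (cases "k = l") (auto simp: trace_def Emat_def intro: sum.neutral)
  have 3: "SO (Emat k l) $ a $ b = (if a = b then real (card (carrier G)) * trace (Emat k l) / real CARD('n) else 0)"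
    by (simp only: SO_eq scaleR_mat_entry)
  have 4: "(\<Sum>u\<in>carrier G. \<rho> u $ a $ k * \<rho> (inv u) $ l $ b) =
     (if a = b then real (card (carrier G)) * trace (Emat k l) / real CARD('n) else 0)"
    using 3 unfolding 1 .
  show ?thesis unfolding 4 2 by (rule if_helper)
qed

end

lemma double_delta:
  fixes F :: "'n::finite \<Rightarrow> 'n \<Rightarrow> real"
  shows "(\<Sum>l\<in>UNIV. \<Sum>b\<in>UNIV. if k = l \<and> a = b then F l b else 0) = F k a"
proof -
  have "(\<Sum>l\<in>UNIV. \<Sum>b\<in>UNIV. if k = l \<and> a = b then F l b else 0)
      = (\<Sum>l\<in>UNIV. if k = l then (\<Sum>b\<in>UNIV. if a = b then F l b else 0) else 0)"
    by (intro sum.cong refl) auto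
  also have "\<dots> = F k a" by simp
  finally show ?thesis .
qed

context rep begin

lemma trace_prod_sum:
  "(\<Sum>u\<in>carrier G. trace (\<rho> u ** A) * trace (\<rho> (inv u) ** B)) =
     real (card (carrier G)) / real CARD('n) * trace (A ** B)"
proof -
  let ?c = "real (card (carrier G)) / real CARD('n)"
  have t: "trace (X ** Y) = (\<Sum>a\<in>UNIV. \<Sum>k\<in>UNIV. X $ a $ k * Y $ k $ a)" for X Y :: "real^'n^'n"
    by (simp add: trace_def matrix_matrix_mult_def)
  have p: "trace (\<rho> u ** A) * trace (\<rho> (inv u) ** B) =
     (\<Sum>a\<in>UNIV. \<Sum>k\<in>UNIV. \<Sum>l\<in>UNIV. \<Sum>b\<in>UNIV. (\<rho> u $ a $ k * \<rho> (inv u) $ l $ b) * (A $ k $ a * B $ b $ l))" for u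
  proof -
    have "trace (\<rho> u ** A) * trace (\<rho> (inv u) ** B) =
     (\<Sum>a\<in>UNIV. \<Sum>l\<in>UNIV. \<Sum>k\<in>UNIV. \<Sum>b\<in>UNIV. (\<rho> u $ a $ k * A $ k $ a) * (\<rho> (inv u) $ l $ b * B $ b $ l))"
      unfolding t sum_product ..
    also have "\<dots> = (\<Sum>a\<in>UNIV. \<Sum>k\<in>UNIV. \<Sum>l\<in>UNIV. \<Sum>b\<in>UNIV. (\<rho> u $ a $ k * A $ k $ a) * (\<rho> (inv u) $ l $ b * B $ b $ l))"
      by (rule sum.cong[OF refl]) (rule sum.swap)
    also have "\<dots> = (\<Sum>a\<in>UNIV. \<Sum>k\<in>UNIV. \<Sum>l\<in>UNIV. \<Sum>b\<in>UNIV. (\<rho> u $ a $ k * \<rho> (inv u) $ l $ b) * (A $ k $ a * B $ b $ l))"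
      by (intro sum.cong refl) (simp only: mult_ac)
    finally show ?thesis .
  qed
  have "(\<Sum>u\<in>carrier G. trace (\<rho> u ** A) * trace (\<rho> (inv u) ** B)) =
     (\<Sum>u\<in>carrier G. \<Sum>a\<in>UNIV. \<Sum>k\<in>UNIV. \<Sum>l\<in>UNIV. \<Sum>b\<in>UNIV. (\<rho> u $ a $ k * \<rho> (inv u) $ l $ b) * (A $ k $ a * B $ b $ l))"
    unfolding p ..
  also have "\<dots> = (\<Sum>a\<in>UNIV. \<Sum>k\<in>UNIV. \<Sum>l\<in>UNIV. \<Sum>b\<in>UNIV. \<Sum>u\<in>carrier G. (\<rho> u $ a $ k * \<rho> (inv u) $ l $ b) * (A $ k $ a * B $ b $ l))"
    by (simp only: sum.swap[where A = "carrier G"])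
  also have "\<dots> = (\<Sum>a\<in>UNIV. \<Sum>k\<in>UNIV. \<Sum>l\<in>UNIV. \<Sum>b\<in>UNIV. (\<Sum>u\<in>carrier G. \<rho> u $ a $ k * \<rho> (inv u) $ l $ b) * (A $ k $ a * B $ b $ l))"
    by (simp only: sum_distrib_right)
  also have "\<dots> = (\<Sum>a\<in>UNIV. \<Sum>k\<in>UNIV. \<Sum>l\<in>UNIV. \<Sum>b\<in>UNIV. if k = l \<and> a = b then ?c * (A $ k $ a * B $ b $ l) else 0)"
    unfolding entry_orth by (intro sum.cong refl) simp
  also have "\<dots> = (\<Sum>a\<in>UNIV. \<Sum>k\<in>UNIV. ?c * (A $ k $ a * B $ a $ k))"
    by (simp only: double_delta)
  also have "\<dots> = ?c * (\<Sum>a\<in>UNIV. \<Sum>k\<in>UNIV. A $ k $ a * B $ a $ k)"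
    by (simp add: sum_distrib_left)
  also have "(\<Sum>a\<in>UNIV. \<Sum>k\<in>UNIV. A $ k $ a * B $ a $ k) = trace (A ** B)"
    unfolding t by (rule sum.swap)
  finally show ?thesis .
qed

definition Mf :: "real^'n^'n" where
  "Mf = (\<Sum>u\<in>carrier G. transpose (\<rho> u) ** \<rho> u)"

lemma Mf_inv: "v \<in> carrier G \<Longrightarrow> transpose (\<rho> v) ** Mf ** \<rho> v = Mf"
proof -
  assume v: "v \<in> carrier G"
  have "transpose (\<rho> v) ** Mf ** \<rho> v = (\<Sum>u\<in>carrier G. transpose (\<rho> (u \<otimes> v)) ** \<rho> (u \<otimes> v))"
    unfolding Mf_def using fin v
    by (simp add: mmult_sum_right mmult_sum_left rho_mult matrix_transpose_mul matrix_mul_assoc)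
  also have "\<dots> = Mf" unfolding Mf_def
    using sum.reindex_bij_betw[OF bij_rmult[OF v], of "\<lambda>u. transpose (\<rho> u) ** \<rho> u"] .
  finally show ?thesis .
qed

lemma inner_transpose_mult: "inner v ((transpose X ** X) *v v) = inner (X *v v) (X *v v)"
  for X :: "real^'n^'n"
proof -
  have "(transpose X ** X) *v v = (X *v v) v* X" by (simp add: matrix_vector_mul_assoc[symmetric])
  hence "inner v ((transpose X ** X) *v v) = inner ((X *v v) v* X) v" by (simp add: inner_commute)
  also have "\<dots> = inner (X *v v) (X *v v)" by (rule dot_lmul_matrix)
  finally show ?thesis .
qed

lemma Mf_pos: "v \<noteq> 0 \<Longrightarrow> Mf *v v \<noteq> 0"
proof -
  assume v: "v \<noteq> 0"
  have A: "inner v (Mf *v v) = (\<Sum>u\<in>carrier G. inner (\<rho> u *v v) (\<rho> u *v v))"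
    unfolding Mf_def using fin by (simp add: sum_mat_vec inner_sum_right inner_transpose_mult)
  have B: "(\<Sum>u\<in>carrier G. inner (\<rho> u *v v) (\<rho> u *v v)) \<ge> inner (\<rho> \<one> *v v) (\<rho> \<one> *v v)"
    by (rule member_le_sum) (auto simp: fin)
  have C: "inner (\<rho> \<one> *v v) (\<rho> \<one> *v v) > 0" using v by (simp add: rho_one)
  have "inner v (Mf *v v) > 0" using A B C by linarith
  thus ?thesis by auto
qed

lemma Mf_invertible: "invertible Mf"
  using Mf_pos matrix_left_invertible_ker invertible_left_inverse by blast

abbreviation "Mi \<equiv> matrix_inv Mf"

lemma Mi_props: "Mf ** Mi = mat 1" "Mi ** Mf = mat 1"
  using matrix_inv_props[OF Mf_invertible] by auto

lemma det_Mf: "det Mf \<noteq> 0"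
  using Mf_invertible invertible_det_nz by blast

lemma transp_inv: "u \<in> carrier G \<Longrightarrow> transpose (\<rho> (inv u)) ** transpose (\<rho> u) = mat 1"
  by (simp add: matrix_transpose_mul[symmetric] rho_inv)

lemma inv_form_comm:
  assumes N: "\<And>u. u \<in> carrier G \<Longrightarrow> transpose (\<rho> u) ** N ** \<rho> u = N"
    and u: "u \<in> carrier G"
  shows "(Mi ** N) ** \<rho> u = \<rho> u ** (Mi ** N)"
proof -
  let ?T = "transpose (\<rho> (inv u))"
  have NT: "N ** \<rho> u = ?T ** N"
  proof -
    have "?T ** N = ?T ** (transpose (\<rho> u) ** N ** \<rho> u)" using N[OF u] by simp
    also have "\<dots> = (?T ** transpose (\<rho> u)) ** N ** \<rho> u" by (simp add: matrix_mul_assoc)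
    finally show ?thesis using transp_inv[OF u] by simp
  qed
  have MT: "Mf ** \<rho> u = ?T ** Mf"
  proof -
    have "?T ** Mf = ?T ** (transpose (\<rho> u) ** Mf ** \<rho> u)" using Mf_inv[OF u] by simp
    also have "\<dots> = (?T ** transpose (\<rho> u)) ** Mf ** \<rho> u" by (simp add: matrix_mul_assoc)
    finally show ?thesis using transp_inv[OF u] by simp
  qed
  have RM: "\<rho> u ** Mi = Mi ** ?T"
  proof -
    have "\<rho> u ** Mi = Mi ** (Mf ** \<rho> u) ** Mi" using Mi_props by (simp add: matrix_mul_assoc)
    also have "\<dots> = Mi ** ?T ** (Mf ** Mi)" unfolding MT by (simp add: matrix_mul_assoc)
    finally show ?thesis using Mi_props by simp
  qed
  have "(Mi ** N) ** \<rho> u = Mi ** (N ** \<rho> u)" by (simp add: matrix_mul_assoc)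
  also have "\<dots> = (Mi ** ?T) ** N" unfolding NT by (simp add: matrix_mul_assoc)
  also have "\<dots> = \<rho> u ** (Mi ** N)" unfolding RM[symmetric] by (simp add: matrix_mul_assoc)
  finally show ?thesis .
qed

definition normalizes :: "real^'n^'n \<Rightarrow> bool" where
  "normalizes y \<longleftrightarrow> (\<forall>u\<in>carrier G. \<exists>u'\<in>carrier G. y ** \<rho> u = \<rho> u' ** y)"

lemma form_preserved:
  assumes ny: "normalizes y" and dy: "det y ^ 2 = 1"
  shows "transpose y ** Mf ** y = Mf"
proof -
  define N where "N = transpose y ** Mf ** y"
  have Ninv: "transpose (\<rho> u) ** N ** \<rho> u = N" if u: "u \<in> carrier G" for u
  proof -
    obtain u' where u': "u' \<in> carrier G" "y ** \<rho> u = \<rho> u' ** y" using ny u unfolding normalizes_def by blast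
    have "transpose (\<rho> u) ** N ** \<rho> u = transpose (y ** \<rho> u) ** Mf ** (y ** \<rho> u)"
      unfolding N_def by (simp add: matrix_transpose_mul matrix_mul_assoc)
    also have "\<dots> = transpose y ** (transpose (\<rho> u') ** Mf ** \<rho> u') ** y"
      unfolding u'(2) by (simp add: matrix_transpose_mul matrix_mul_assoc)
    also have "\<dots> = N" unfolding Mf_inv[OF u'(1)] N_def ..
    finally show ?thesis .
  qed
  obtain c where c: "Mi ** N = c *\<^sub>R mat 1"
    using schur[of "Mi ** N"] inv_form_comm[OF Ninv] by metis
  have NcM: "N = c *\<^sub>R Mf"
  proof -
    have "N = Mf ** (Mi ** N)" using Mi_props by (simp add: matrix_mul_assoc)
    also have "\<dots> = c *\<^sub>R Mf" unfolding c by (simp add: matrix_scalar_ac)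
    finally show ?thesis .
  qed
  have "det N = det Mf" unfolding N_def using dy by (simp add: det_mul power2_eq_square)
  hence "c ^ CARD('n) * det Mf = det Mf" unfolding NcM det_scaleR .
  hence "c ^ CARD('n) = 1" using det_Mf by simp
  hence "c = 1" using odd_pow_eq_1 odd_dim by blast
  thus ?thesis using NcM N_def by simp
qed

lemma trace_inv_eq:
  assumes ny: "normalizes y" and dy: "det y ^ 2 = 1" and yy: "y ** y' = mat 1"
  shows "trace y' = trace y"
proof -
  have P: "transpose y ** Mf ** y = Mf" by (rule form_preserved[OF ny dy])
  have L: "(Mi ** transpose y ** Mf) ** y = mat 1"
    using P Mi_props by (simp add: matrix_mul_assoc[symmetric])
  have "y' = ((Mi ** transpose y ** Mf) ** y) ** y'" unfolding L by simp
  also have "\<dots> = Mi ** transpose y ** Mf" using yy by (simp add: matrix_mul_assoc[symmetric])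
  finally have "y' = Mi ** transpose y ** Mf" .
  hence "trace y' = trace (Mf ** (Mi ** transpose y))" by (simp add: trace_mul_sym[of "Mi ** transpose y" Mf] matrix_mul_assoc)
  also have "\<dots> = trace (transpose y)" using Mi_props by (simp add: matrix_mul_assoc)
  finally show ?thesis by (simp add: trace_transpose)
qed

end

context rep begin

lemma trace_conj: "u \<in> carrier G \<Longrightarrow> trace (\<rho> u ** A ** \<rho> (inv u)) = trace A"
proof -
  assume u: "u \<in> carrier G"
  have "trace (\<rho> u ** A ** \<rho> (inv u)) = trace (\<rho> u ** (A ** \<rho> (inv u)))" by (simp add: matrix_mul_assoc)
  also have "\<dots> = trace (A ** \<rho> (inv u) ** \<rho> u)" by (rule trace_mul_sym)
  also have "\<dots> = trace A" using rho_inv[OF u] by (simp add: matrix_mul_assoc[symmetric])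
  finally show ?thesis .
qed

lemma key_ineq:
  assumes ww: "w ** w' = mat 1" "w' ** w = mat 1" and dw: "det w ^ 2 = 1" and nw: "normalizes w"
  shows "(trace w)^2 \<le> real (card {u\<in>carrier G. \<rho> u ** w = w ** \<rho> u})"
proof -
  define C where "C = {u\<in>carrier G. \<rho> u ** w = w ** \<rho> u}"
  define n where "n = real (card (carrier G))"
  have n_pos: "n > 0" using fin one_closed unfolding n_def by (auto simp: card_gt_0_iff)
  define t where "t v = trace (\<rho> v ** w)" for v
  define cj where "cj u = \<rho> u ** w ** \<rho> (inv u)" for u
  have S2: "(\<Sum>v\<in>carrier G. (t v)^2) = n"
  proof -
    have "(t v)^2 = trace (\<rho> v ** w) * trace (\<rho> (inv v) ** w')" if v: "v \<in> carrier G" for v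
    proof -
      have ny: "normalizes (\<rho> v ** w)" unfolding normalizes_def
      proof
        fix u assume u: "u \<in> carrier G"
        obtain u' where u': "u' \<in> carrier G" "w ** \<rho> u = \<rho> u' ** w" using nw u unfolding normalizes_def by blast
        have "\<rho> v ** w ** \<rho> u = \<rho> (v \<otimes> u' \<otimes> inv v) ** (\<rho> v ** w)"
          using u' v by (simp add: rho_mult matrix_mul_assoc[symmetric] rho_inv)
             (simp add: matrix_mul_assoc rho_inv(1))
        thus "\<exists>u''\<in>carrier G. \<rho> v ** w ** \<rho> u = \<rho> u'' ** (\<rho> v ** w)" using u' v by blast
      qed
      have dy: "det (\<rho> v ** w) ^ 2 = 1" using det_rho_sq[OF v] dw by (simp add: det_mul power_mult_distrib)
      have yy: "(\<rho> v ** w) ** (w' ** \<rho> (inv v)) = mat 1"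
        using ww rho_inv[OF v] by (simp add: matrix_mul_assoc) (simp add: matrix_mul_assoc[symmetric])
      have "trace (w' ** \<rho> (inv v)) = trace (\<rho> v ** w)" by (rule trace_inv_eq[OF ny dy yy])
      moreover have "trace (w' ** \<rho> (inv v)) = trace (\<rho> (inv v) ** w')" by (rule trace_mul_sym)
      ultimately show ?thesis unfolding t_def by (simp add: power2_eq_square)
    qed
    hence "(\<Sum>v\<in>carrier G. (t v)^2) = (\<Sum>v\<in>carrier G. trace (\<rho> v ** w) * trace (\<rho> (inv v) ** w'))"
      by (intro sum.cong) auto
    also have "\<dots> = n / real CARD('n) * trace (w ** w')" unfolding n_def by (rule trace_prod_sum)
    also have "\<dots> = n" using ww by (simp add: trace_I)
    finally show ?thesis .
  qed
  have ex: "\<exists>v\<in>carrier G. cj u = \<rho> v ** w" if u: "u \<in> carrier G" for u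
  proof -
    obtain u' where u': "u' \<in> carrier G" "w ** \<rho> (inv u) = \<rho> u' ** w" using nw u unfolding normalizes_def by blast
    have "cj u = \<rho> (u \<otimes> u') ** w" unfolding cj_def using u u'
      by (simp add: rho_mult matrix_mul_assoc[symmetric])
    thus ?thesis using u u' by blast
  qed
  have uniq: "v1 = v2" if "v1 \<in> carrier G" "v2 \<in> carrier G" "\<rho> v1 ** w = \<rho> v2 ** w" for v1 v2
  proof -
    have "\<rho> v1 ** w ** w' = \<rho> v2 ** w ** w'" using that by simp
    hence "\<rho> v1 = \<rho> v2" using ww by (simp add: matrix_mul_assoc[symmetric])
    thus ?thesis using rinj that unfolding inj_on_def by blast
  qed
  define phi where "phi u = (SOME v. v \<in> carrier G \<and> cj u = \<rho> v ** w)" for u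
  have phi: "phi u \<in> carrier G" "cj u = \<rho> (phi u) ** w" if "u \<in> carrier G" for u
    using someI_ex[OF ex[OF that, unfolded Bex_def]] unfolding phi_def by auto
  define a where "a v = card {u\<in>carrier G. phi u = v}" for v
  have fib: "(\<Sum>v\<in>carrier G. real (a v) * f v) = (\<Sum>u\<in>carrier G. f (phi u))" for f
  proof -
    have "(\<Sum>v\<in>carrier G. real (a v) * f v) = (\<Sum>v\<in>carrier G. \<Sum>u\<in>{u\<in>carrier G. phi u = v}. f (phi u))"
      unfolding a_def by (intro sum.cong refl) simp
    also have "\<dots> = (\<Sum>u\<in>carrier G. f (phi u))"
      by (rule sum.group) (auto simp: fin phi)
    finally show ?thesis .
  qed
  have S1: "(\<Sum>v\<in>carrier G. real (a v) * t v) = n * trace w"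
  proof -
    have "(\<Sum>v\<in>carrier G. real (a v) * t v) = (\<Sum>u\<in>carrier G. t (phi u))" by (rule fib)
    also have "\<dots> = (\<Sum>u\<in>carrier G. trace w)"
    proof (intro sum.cong refl)
      fix u assume u: "u \<in> carrier G"
      have "t (phi u) = trace (cj u)" unfolding t_def using phi[OF u] by simp
      also have "\<dots> = trace w" unfolding cj_def by (rule trace_conj[OF u])
      finally show "t (phi u) = trace w" .
    qed
    finally show ?thesis unfolding n_def by simp
  qed
  have cj_mult: "cj (u \<otimes> z) = \<rho> u ** cj z ** \<rho> (inv u)" if "u \<in> carrier G" "z \<in> carrier G" for u z
    unfolding cj_def using that by (simp add: rho_mult inv_mult_group matrix_mul_assoc)
  have cj_C: "cj z = w \<longleftrightarrow> z \<in> C" if z: "z \<in> carrier G" for z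
  proof
    assume h: "cj z = w"
    have h': "\<rho> z ** w ** \<rho> (inv z) = w" using h unfolding cj_def .
    have "w ** \<rho> z = \<rho> z ** w ** \<rho> (inv z) ** \<rho> z" using h' by simp
    also have "\<dots> = (\<rho> z ** w) ** (\<rho> (inv z) ** \<rho> z)" by (simp add: matrix_mul_assoc)
    also have "\<dots> = \<rho> z ** w" using rho_inv(1)[OF z] by simp
    finally show "z \<in> C" unfolding C_def using z by simp
  next
    assume "z \<in> C"
    hence "\<rho> z ** w = w ** \<rho> z" unfolding C_def by simp
    hence "cj z = w ** (\<rho> z ** \<rho> (inv z))" unfolding cj_def by (simp add: matrix_mul_assoc)
    thus "cj z = w" using rho_inv[OF z] by simp
  qed
  have cancel: "X = Y" if "u \<in> carrier G" "\<rho> u ** X ** \<rho> (inv u) = \<rho> u ** Y ** \<rho> (inv u)" for u X Y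
  proof -
    have "\<rho> (inv u) ** (\<rho> u ** X ** \<rho> (inv u)) ** \<rho> u = \<rho> (inv u) ** (\<rho> u ** Y ** \<rho> (inv u)) ** \<rho> u"
      using that by simp
    thus ?thesis using rho_inv[OF that(1)] by (simp add: matrix_mul_assoc)
      (simp add: matrix_mul_assoc[symmetric])
  qed
  have afib: "a (phi u) = card C" if u: "u \<in> carrier G" for u
  proof -
    have "{u'\<in>carrier G. phi u' = phi u} = (\<lambda>z. u \<otimes> z) ` C"
    proof (intro equalityI subsetI)
      fix u' assume "u' \<in> {u'\<in>carrier G. phi u' = phi u}"
      hence u': "u' \<in> carrier G" "phi u' = phi u" by auto
      define z where "z = inv u \<otimes> u'"
      have z: "z \<in> carrier G" "u' = u \<otimes> z" unfolding z_def using u u' by (auto simp: m_assoc[symmetric])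
      have "cj u' = cj u" using phi[OF u] phi[OF u'(1)] u'(2) by simp
      hence "\<rho> u ** cj z ** \<rho> (inv u) = \<rho> u ** w ** \<rho> (inv u)" using cj_mult[OF u z(1)] z(2) unfolding cj_def by simp
      hence "cj z = w" by (rule cancel[OF u])
      hence "z \<in> C" using cj_C[OF z(1)] by simp
      thus "u' \<in> (\<lambda>z. u \<otimes> z) ` C" using z(2) by blast
    next
      fix u' assume "u' \<in> (\<lambda>z. u \<otimes> z) ` C"
      then obtain z where z: "z \<in> C" "u' = u \<otimes> z" by blast
      have zG: "z \<in> carrier G" using z unfolding C_def by simp
      have u'G: "u' \<in> carrier G" using z zG u by simp
      have "cj u' = \<rho> u ** w ** \<rho> (inv u)" using cj_mult[OF u zG] z cj_C[OF zG] by simp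
      hence "\<rho> (phi u') ** w = \<rho> (phi u) ** w" using phi[OF u] phi[OF u'G] unfolding cj_def by simp
      hence "phi u' = phi u" using uniq phi u u'G by blast
      thus "u' \<in> {u'\<in>carrier G. phi u' = phi u}" using u'G by simp
    qed
    moreover have "inj_on (\<lambda>z. u \<otimes> z) C" unfolding C_def inj_on_def using u by auto
    ultimately show ?thesis unfolding a_def by (simp add: card_image)
  qed
  have SA: "(\<Sum>v\<in>carrier G. real (a v) * real (a v)) = n * real (card C)"
  proof -
    have "(\<Sum>v\<in>carrier G. real (a v) * real (a v)) = (\<Sum>u\<in>carrier G. real (a (phi u)))" by (rule fib)
    also have "\<dots> = (\<Sum>u\<in>carrier G. real (card C))" by (intro sum.cong refl) (simp add: afib)
    finally show ?thesis unfolding n_def by simp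
  qed
  define s where "s = trace w"
  have "0 \<le> (\<Sum>v\<in>carrier G. (real (a v) - s * t v)^2)" by (rule sum_nonneg) simp
  also have "\<dots> = (\<Sum>v\<in>carrier G. real (a v) * real (a v)) - 2 * s * (\<Sum>v\<in>carrier G. real (a v) * t v)
      + s^2 * (\<Sum>v\<in>carrier G. (t v)^2)"
    by (simp add: power2_eq_square algebra_simps sum.distrib sum_subtractf sum_distrib_left)
  also have "\<dots> = n * (real (card C) - s^2)"
    unfolding SA S1 S2 s_def by (simp add: power2_eq_square algebra_simps)
  finally have "0 \<le> n * (real (card C) - s^2)" .
  hence "0 \<le> real (card C) - s^2" using n_pos by (simp add: zero_le_mult_iff)
  thus ?thesis unfolding s_def C_def by simp
qed

end

lemma fix_pow: "f u = u \<Longrightarrow> (f ^^ y) u = u"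
  by (induction y) auto

context group begin

lemma real_rep_one:
  assumes "real_rep G \<rho>" shows "\<rho> \<one> = mat 1"
proof -
  have "invertible (\<rho> \<one>)" using assms one_closed unfolding real_rep_def by blast
  then obtain B where B: "B ** \<rho> \<one> = mat 1" using invertible_left_inverse by blast
  have "\<rho> \<one> = \<rho> \<one> ** \<rho> \<one>"
    using assms one_closed l_one unfolding real_rep_def by metis
  hence "B ** \<rho> \<one> = B ** (\<rho> \<one> ** \<rho> \<one>)" by simp
  thus ?thesis using B by (simp add: matrix_mul_assoc)
qed

lemma rep_inj:
  assumes sg: "simple_group G" and rr: "real_rep G \<rho>" and nt: "\<exists>x\<in>carrier G. \<rho> x \<noteq> mat 1"
  shows "inj_on \<rho> (carrier G)"
proof -
  have r1: "\<rho> \<one> = mat 1" by (rule real_rep_one[OF rr])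
  have rm: "\<rho> (x \<otimes> y) = \<rho> x ** \<rho> y" if "x \<in> carrier G" "y \<in> carrier G" for x y
    using rr that unfolding real_rep_def by blast
  have ri: "\<rho> x ** \<rho> (inv x) = mat 1" "\<rho> (inv x) ** \<rho> x = mat 1" if "x \<in> carrier G" for x
    using rm[of x "inv x"] rm[of "inv x" x] that r1 by auto
  define K where "K = {u\<in>carrier G. \<rho> u = mat 1}"
  have sub: "subgroup K G"
  proof (rule subgroupI)
    show "K \<subseteq> carrier G" unfolding K_def by auto
    show "K \<noteq> {}" using r1 unfolding K_def by auto
    show "inv a \<in> K" if "a \<in> K" for a
      using that ri(2)[of a] unfolding K_def by auto
    show "a \<otimes> b \<in> K" if "a \<in> K" "b \<in> K" for a b
      using that rm[of a b] unfolding K_def by auto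
  qed
  have "K \<lhd> G" unfolding normal_inv_iff
  proof (intro conjI sub ballI)
    fix x h assume x: "x \<in> carrier G" and h: "h \<in> K"
    have "\<rho> (x \<otimes> h \<otimes> inv x) = \<rho> x ** \<rho> h ** \<rho> (inv x)" using x h unfolding K_def by (simp add: rm)
    also have "\<dots> = mat 1" using h ri[OF x] unfolding K_def by simp
    finally show "x \<otimes> h \<otimes> inv x \<in> K" using x h unfolding K_def by simp
  qed
  hence "K = carrier G \<or> K = {\<one>}" by (rule simple_group.no_real_normal_subgroup[OF sg])
  moreover have "K \<noteq> carrier G" using nt unfolding K_def by auto
  ultimately have K1: "K = {\<one>}" by simp
  show ?thesis unfolding inj_on_def
  proof (intro ballI impI)
    fix u u' assume u: "u \<in> carrier G" and u': "u' \<in> carrier G" and e: "\<rho> u = \<rho> u'"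
    have "\<rho> (u \<otimes> inv u') = mat 1" using u u' e ri(1)[OF u'] by (simp add: rm)
    hence "u \<otimes> inv u' \<in> K" using u u' unfolding K_def by simp
    hence "u \<otimes> inv u' = \<one>" using K1 by simp
    hence "u \<otimes> inv u' \<otimes> u' = u'" using u' by simp
    thus "u = u'" using u u' by (simp add: m_assoc)
  qed
qed

end

lemma mat_cancel: "A ** B = mat 1 \<Longrightarrow> C ** A ** B = (C::real^'n^'n)"
  by (simp add: matrix_mul_assoc[symmetric])

lemma fp_divisor:
  fixes \<alpha> :: "'a \<Rightarrow> 'a" and m k :: nat
  assumes k: "0 < k" "k < m"
    and cl: "\<And>j u. u \<in> S \<Longrightarrow> (\<alpha> ^^ j) u \<in> S"
    and mfix: "\<And>u. u \<in> S \<Longrightarrow> (\<alpha> ^^ m) u = u"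
  shows "\<exists>p. prime p \<and> p dvd m \<and> {u\<in>S. (\<alpha> ^^ k) u = u} \<subseteq> {u\<in>S. (\<alpha> ^^ (m div p)) u = u}"
proof -
  define q where "q = gcd k m"
  have q0: "q > 0" using k unfolding q_def by simp
  have qk: "q \<le> k" using k unfolding q_def by (simp add: gcd_le1_nat)
  have qm: "q dvd m" unfolding q_def by simp
  define r where "r = m div q"
  have mqr: "m = q * r" unfolding r_def using qm by simp
  have "r \<noteq> 1" using mqr qk k by auto
  then obtain p where p: "prime p" "p dvd r" using prime_factor_nat by blast
  then obtain s where rs: "r = p * s" by blast
  have pm: "p dvd m" using mqr rs by simp
  have mdp: "m div p = q * s" using mqr rs p(1) by (simp add: prime_gt_0_nat)
  have "{u\<in>S. (\<alpha> ^^ k) u = u} \<subseteq> {u\<in>S. (\<alpha> ^^ (m div p)) u = u}"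
  proof safe
    fix u assume u: "u \<in> S" "(\<alpha> ^^ k) u = u"
    obtain a b where ab: "k * a = m * b + q" using bezout_nat[of k m] k unfolding q_def by auto
    have "(\<alpha> ^^ (k * a)) u = u" using fix_pow[of "\<alpha> ^^ k" u a] u by (simp add: funpow_mult)
    moreover have "(\<alpha> ^^ (m * b)) v = v" if "v \<in> S" for v
      using fix_pow[of "\<alpha> ^^ m" v b] mfix[OF that] by (simp add: funpow_mult)
    ultimately have "(\<alpha> ^^ q) u = u" using ab cl[OF u(1)] by (simp add: funpow_add)
    hence "((\<alpha> ^^ q) ^^ s) u = u" by (rule fix_pow)
    thus "(\<alpha> ^^ (m div p)) u = u" unfolding mdp by (simp add: funpow_mult)
  qed
  thus ?thesis using p pm by blast
qed

theorem lemma4p3p3: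
  fixes G :: "('g, 'b) monoid_scheme"
    and \<rho> :: "'g \<Rightarrow> real^'n^'n"
    and n :: "real^'n^'n"
    and \<nu> :: "'g \<Rightarrow> 'g"
  assumes "simple_group G" and "finite (carrier G)" and "\<not> comm_group G"
    and "real_rep G \<rho>" and "irreducible_rep G \<rho>"
    and "\<exists>x\<in>carrier G. \<rho> x \<noteq> mat 1"
    and "odd CARD('n)"
    and "invertible n" and "\<exists>k>0. mat_pow n k = mat 1"
    and "(\<lambda>x. n ** \<rho> x ** matrix_inv n) ` carrier G = \<rho> ` carrier G"
    and "\<And>x. x \<in> carrier G \<Longrightarrow> \<nu> x = the_inv_into (carrier G) \<rho> (n ** \<rho> x ** matrix_inv n)"
    and "g \<in> carrier G"
    and "\<alpha> = (\<lambda>x. g \<otimes>\<^bsub>G\<^esub> \<nu> x \<otimes>\<^bsub>G\<^esub> inv\<^bsub>G\<^esub> g)"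
    and "even (aut_order G \<alpha>)"
    and "\<And>p. prime p \<Longrightarrow> p dvd aut_order G \<alpha> \<Longrightarrow>
           real CARD('n) > (real (aut_order G \<alpha>) - 1) *
              sqrt (real (card (fixed_points G (\<alpha> ^^ (aut_order G \<alpha> div p)))))"
  shows "\<exists>h\<in>carrier G. \<exists>v::real^'n. v \<noteq> 0 \<and> (\<rho> h ** n) *v v = v"
proof -
  have grp: "group G" using assms(1) unfolding simple_group_def by blast
  have rinj: "inj_on \<rho> (carrier G)" by (rule group.rep_inj[OF grp assms(1) assms(4) assms(6)])
  have "rep G \<rho>" unfolding rep_def rep_axioms_def using grp assms(2,4,5,7) rinj by blast
  interpret R: rep G \<rho> by fact
  let ?d = "real CARD('n)"
  define ni where "ni = matrix_inv n"
  have nn: "n ** ni = mat 1" "ni ** n = mat 1" using matrix_inv_props[OF assms(8)] ni_def by auto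
  have nu: "\<nu> u \<in> carrier G" "\<rho> (\<nu> u) = n ** \<rho> u ** ni" if u: "u \<in> carrier G" for u
  proof -
    have im: "n ** \<rho> u ** ni \<in> \<rho> ` carrier G" using assms(10) u ni_def by blast
    show "\<nu> u \<in> carrier G" using assms(11)[OF u] the_inv_into_into[OF rinj im subset_refl] ni_def by simp
    show "\<rho> (\<nu> u) = n ** \<rho> u ** ni" using assms(11)[OF u] f_the_inv_into_f[OF rinj im] ni_def by simp
  qed
  have gG: "g \<in> carrier G" by (rule assms(12))
  have ginv: "inv\<^bsub>G\<^esub> g \<in> carrier G" using gG by simp
  have rg: "\<rho> g ** \<rho> (inv\<^bsub>G\<^esub> g) = mat 1" "\<rho> (inv\<^bsub>G\<^esub> g) ** \<rho> g = mat 1"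
    using R.rho_inv[OF gG] by auto
  define x where "x = \<rho> g ** n"
  define xi where "xi = ni ** \<rho> (inv\<^bsub>G\<^esub> g)"
  have xx: "x ** xi = mat 1" "xi ** x = mat 1"
    unfolding x_def xi_def using rg nn by (simp_all add: matrix_mul_assoc mat_cancel)
  have al: "\<alpha> u \<in> carrier G" "\<rho> (\<alpha> u) ** x = x ** \<rho> u" if u: "u \<in> carrier G" for u
  proof -
    show "\<alpha> u \<in> carrier G" unfolding assms(13) using u gG nu by simp
    have "\<rho> (\<alpha> u) = \<rho> g ** (n ** \<rho> u ** ni) ** \<rho> (inv\<^bsub>G\<^esub> g)"
      unfolding assms(13) using u gG nu by (simp add: R.rho_mult)
    hence "\<rho> (\<alpha> u) ** x = \<rho> g ** n ** \<rho> u ** ni ** \<rho> (inv\<^bsub>G\<^esub> g) ** \<rho> g ** n"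
      unfolding x_def by (simp add: matrix_mul_assoc)
    also have "\<dots> = \<rho> g ** n ** \<rho> u" using rg nn by (simp add: mat_cancel)
    finally show "\<rho> (\<alpha> u) ** x = x ** \<rho> u" unfolding x_def by (simp add: matrix_mul_assoc)
  qed
  have alk: "(\<alpha> ^^ k) u \<in> carrier G \<and> \<rho> ((\<alpha> ^^ k) u) ** mat_pow x k = mat_pow x k ** \<rho> u"
    if u: "u \<in> carrier G" for k u
  proof (induction k)
    case 0 thus ?case using u by simp
  next
    case (Suc k)
    let ?v = "(\<alpha> ^^ k) u"
    have v: "?v \<in> carrier G" using Suc by simp
    have "\<rho> (\<alpha> ?v) ** (x ** mat_pow x k) = (\<rho> (\<alpha> ?v) ** x) ** mat_pow x k" by (simp add: matrix_mul_assoc)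
    also have "\<dots> = x ** (\<rho> ?v ** mat_pow x k)" unfolding al(2)[OF v] by (simp add: matrix_mul_assoc)
    also have "\<dots> = x ** mat_pow x k ** \<rho> u" using Suc by (simp add: matrix_mul_assoc)
    finally show ?case using al(1)[OF v] by simp
  qed
  have alinj: "inj_on \<alpha> (carrier G)"
  proof (rule inj_onI)
    fix u u' assume u: "u \<in> carrier G" "u' \<in> carrier G" "\<alpha> u = \<alpha> u'"
    hence "x ** \<rho> u = x ** \<rho> u'" using al(2) by metis
    hence "xi ** x ** \<rho> u = xi ** x ** \<rho> u'" by (simp add: matrix_mul_assoc[symmetric])
    hence "\<rho> u = \<rho> u'" using xx by simp
    thus "u = u'" using rinj u unfolding inj_on_def by blast
  qed
  have alkinj0: "\<forall>u\<in>carrier G. \<forall>u'\<in>carrier G. (\<alpha> ^^ k) u = (\<alpha> ^^ k) u' \<longrightarrow> u = u'" for k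
  proof (induction k)
    case 0 thus ?case by simp
  next
    case (Suc k)
    show ?case
    proof (intro ballI impI)
      fix u u' assume u: "u \<in> carrier G" "u' \<in> carrier G" "(\<alpha> ^^ Suc k) u = (\<alpha> ^^ Suc k) u'"
      have "(\<alpha> ^^ k) u = (\<alpha> ^^ k) u'"
        using u alk[OF u(1), of k] alk[OF u(2), of k] alinj unfolding inj_on_def by auto
      thus "u = u'" using Suc u by blast
    qed
  qed
  have alkinj: "u = u'" if "u \<in> carrier G" "u' \<in> carrier G" "(\<alpha> ^^ k) u = (\<alpha> ^^ k) u'" for k u u'
    using alkinj0 that by blast
  have exord: "\<exists>k>0. \<forall>u\<in>carrier G. (\<alpha> ^^ k) u = u"
  proof -
    define F where "F k = restrict (\<alpha> ^^ k) (carrier G)" for k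
    have "range F \<subseteq> carrier G \<rightarrow>\<^sub>E carrier G" unfolding F_def using alk by auto
    moreover have "finite (carrier G \<rightarrow>\<^sub>E carrier G)" using assms(2) by (simp add: finite_PiE)
    ultimately have "finite (range F)" by (rule finite_subset)
    hence "\<not> inj F" using finite_imageD[of F UNIV] by auto
    then obtain i j where ij: "i \<noteq> j" "F i = F j" unfolding inj_def by blast
    have gen: "\<exists>k>0. \<forall>u\<in>carrier G. (\<alpha> ^^ k) u = u" if "i < j" "F i = F j" for i j
    proof (intro exI[of _ "j - i"] conjI ballI)
      show "0 < j - i" using that by simp
      fix u assume u: "u \<in> carrier G"
      have "(\<alpha> ^^ i) u = (\<alpha> ^^ j) u" using fun_cong[OF that(2), of u] u unfolding F_def by simp
      also have "\<dots> = (\<alpha> ^^ i) ((\<alpha> ^^ (j - i)) u)"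
        using that(1) funpow_add[of i "j - i" \<alpha>] by simp
      finally show "(\<alpha> ^^ (j - i)) u = u" using alkinj[of "(\<alpha> ^^ (j - i)) u" u i] u alk by metis
    qed
    show ?thesis using ij gen by (cases "i < j") (auto simp: not_less_iff_gr_or_eq)
  qed
  define m where "m = aut_order G \<alpha>"
  have m: "0 < m" "\<And>u. u \<in> carrier G \<Longrightarrow> (\<alpha> ^^ m) u = u"
    using LeastI_ex[OF exord] unfolding m_def aut_order_def by auto
  have m2: "m \<ge> 2"
  proof -
    have "even m" using assms(14) unfolding m_def .
    then obtain h where "m = 2 * h" by blast
    thus ?thesis using m(1) by simp
  qed
  have dn: "det n ^ 2 = 1"
  proof -
    obtain k where k: "k > 0" "mat_pow n k = mat 1" using assms(9) by blast
    hence "det n ^ k = 1" by (metis det_I det_mat_pow)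
    hence "\<bar>det n\<bar> = 1" using pow_eq_1_abs k by blast
    thus ?thesis by (metis power2_abs power_one)
  qed
  have dx: "det x ^ 2 = 1" unfolding x_def using dn R.det_rho_sq[OF gG] by (simp add: det_mul power_mult_distrib)
  have dxk: "det (mat_pow x k) ^ 2 = 1" for k
  proof -
    have "(det x ^ k)^2 = (det x ^ 2)^k" by (metis power_mult mult.commute)
    thus ?thesis using dx by (simp add: det_mat_pow)
  qed
  have xm: "mat_pow x m = mat 1"
  proof -
    have "mat_pow x m ** \<rho> u = \<rho> u ** mat_pow x m" if u: "u \<in> carrier G" for u
      using alk[OF u, of m] m(2)[OF u] by simp
    then obtain c where c: "mat_pow x m = c *\<^sub>R mat 1" using R.schur by blast
    have "det (mat_pow x m) = 1"
    proof -
      obtain h where "m = 2 * h" using assms(14) unfolding m_def by blast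
      thus ?thesis using dx by (simp add: det_mat_pow power_mult)
    qed
    hence "c ^ CARD('n) = 1" unfolding c det_scaleR by simp
    hence "c = 1" using odd_pow_eq_1 assms(7) by blast
    thus ?thesis using c by simp
  qed
  have bound: "\<bar>trace (mat_pow x k)\<bar> < ?d / (real m - 1)" if k: "0 < k" "k < m" for k
  proof -
    define w where "w = mat_pow x k"
    define w' where "w' = mat_pow x (m - k)"
    have ww: "w ** w' = mat 1" "w' ** w = mat 1"
      unfolding w_def w'_def using k xm by (simp_all add: mat_pow_add[symmetric])
    have nw: "R.normalizes w" unfolding R.normalizes_def w_def using alk by metis
    have key: "(trace w)^2 \<le> real (card {u\<in>carrier G. \<rho> u ** w = w ** \<rho> u})"
      by (rule R.key_ineq[OF ww _ nw]) (simp add: w_def dxk)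
    obtain p where p: "prime p" "p dvd m"
      and sub: "{u\<in>carrier G. (\<alpha> ^^ k) u = u} \<subseteq> {u\<in>carrier G. (\<alpha> ^^ (m div p)) u = u}"
      using fp_divisor[OF k, of "carrier G" \<alpha>] alk m(2) by blast
    have C: "{u\<in>carrier G. \<rho> u ** w = w ** \<rho> u} \<subseteq> {u\<in>carrier G. (\<alpha> ^^ k) u = u}"
    proof safe
      fix u assume u: "u \<in> carrier G" "\<rho> u ** w = w ** \<rho> u"
      have "\<rho> ((\<alpha> ^^ k) u) ** w = \<rho> u ** w" using alk[OF u(1), of k] u(2) unfolding w_def by simp
      hence "\<rho> ((\<alpha> ^^ k) u) ** w ** w' = \<rho> u ** w ** w'" by simp
      hence "\<rho> ((\<alpha> ^^ k) u) = \<rho> u" using ww by (simp add: matrix_mul_assoc[symmetric])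
      thus "(\<alpha> ^^ k) u = u" using rinj u alk[OF u(1), of k] unfolding inj_on_def by blast
    qed
    let ?FP = "fixed_points G (\<alpha> ^^ (m div p))"
    have FP: "?FP = {u\<in>carrier G. (\<alpha> ^^ (m div p)) u = u}" unfolding fixed_points_def ..
    have "card {u\<in>carrier G. \<rho> u ** w = w ** \<rho> u} \<le> card ?FP"
      unfolding FP by (rule card_mono) (use assms(2) C sub in auto)
    hence tr: "(trace w)^2 \<le> real (card ?FP)" using key by linarith
    have t1: "\<bar>trace w\<bar> \<le> sqrt (real (card ?FP))" using real_sqrt_le_mono[OF tr] by simp
    have t2: "?d > (real m - 1) * sqrt (real (card ?FP))" using assms(15)[OF p[unfolded m_def]] unfolding m_def .
    have t3: "real m - 1 > 0" using m2 by simp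
    have "\<bar>trace w\<bar> * (real m - 1) \<le> sqrt (real (card ?FP)) * (real m - 1)"
      by (rule mult_right_mono) (use t1 t3 in auto)
    hence "\<bar>trace w\<bar> * (real m - 1) < ?d" using t2 by (simp add: mult.commute)
    hence "\<bar>trace w\<bar> < ?d / (real m - 1)" using t3 by (simp add: less_divide_eq)
    thus ?thesis unfolding w_def .
  qed
  define P where "P = (\<Sum>k<m. mat_pow x k)"
  obtain m1 where m1: "m = Suc m1" using m(1) by (cases m) auto
  have m1pos: "m1 > 0" using m2 m1 by simp
  have trP: "trace P > 0"
  proof -
    have "trace P = (\<Sum>k<m. trace (mat_pow x k))" unfolding P_def by (simp add: trace_sum)
    also have "\<dots> = ?d + (\<Sum>k<m1. trace (mat_pow x (Suc k)))"
      unfolding m1 sum.lessThan_Suc_shift by (simp add: trace_I)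
    finally have e: "trace P = ?d + (\<Sum>k<m1. trace (mat_pow x (Suc k)))" .
    have "(\<Sum>k<m1. - trace (mat_pow x (Suc k))) < (\<Sum>k<m1. ?d / (real m - 1))"
    proof (rule sum_strict_mono)
      show "finite {..<m1}" by simp
      show "{..<m1} \<noteq> {}" using m1pos by auto
      fix k assume "k \<in> {..<m1}"
      hence "\<bar>trace (mat_pow x (Suc k))\<bar> < ?d / (real m - 1)" using bound[of "Suc k"] m1 by simp
      thus "- trace (mat_pow x (Suc k)) < ?d / (real m - 1)" by linarith
    qed
    also have "\<dots> = ?d" using m1 m1pos by simp
    finally show ?thesis using e by (simp add: sum_negf)
  qed
  have xP: "x ** P = P"
  proof -
    have "x ** P = (\<Sum>k<m. mat_pow x (Suc k))" unfolding P_def by (simp add: mmult_sum_right)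
    moreover have "(\<Sum>k<Suc m. mat_pow x k) = mat 1 + (\<Sum>k<m. mat_pow x (Suc k))"
      by (simp only: sum.lessThan_Suc_shift) simp
    moreover have "(\<Sum>k<Suc m. mat_pow x k) = P + mat 1" unfolding P_def using xm by simp
    ultimately show ?thesis by (simp add: add.commute)
  qed
  have "P \<noteq> mat 0" using trP by (auto simp: trace_def)
  then obtain v where v: "P *v v \<noteq> 0"
    using matrix_eq[of P "mat 0"] by auto
  have "(\<rho> g ** n) *v (P *v v) = P *v v"
    using xP unfolding x_def by (simp add: matrix_vector_mul_assoc)
  thus ?thesis using v gG by blast
qed

end
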